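(* Let $\Bbbk$ be an algebraically closed field with $\mathrm{char}(\Bbbk)\neq 2$, let $n\ge1$, and let $\mu=(\mu_{ij})$ with $\mu_{ij}\in\Bbbk^\times$, $\mu_{ij}\mu_{ji}=1$, $\mu_{ii}=1$. Let $\Phi:\mathbb P^{n-1}\times\mathbb P^{n-1}\to\mathbb P(M^\mu(n,\Bbbk))$ be given by $\Phi(a,b)=(a_ib_j+\mu_{ij}a_jb_i)_{i,j=1}^n$ for $a=(a_1,\dots,a_n)$, $b=(b_1,\dots,b_n)$. Then the image of $\Phi$ equals $\{M\in\mathbb P(M^\mu(n,\Bbbk)) : \mu\text{-rank}(M)\le 2\}$.
   Context: $S$ is the $\Bbbk$-algebra on generators $z_1,\dots,z_n$ with relations $z_jz_i=\mu_{ij}z_iz_j$ for all $i,j$. $M^\mu(n,\Bbbk)$ is the vector space of $\mu$-symmetric matrices, i.e. $M\in M(n,\Bbbk)$ with $M_{ij}=\mu_{ij}M_{ji}$ for all $i,j$. The map $\tau:\mathbb P(M^\mu(n,\Bbbk))\to\mathbb P(S_2)$ is $\tau(M)=z^TMz=\sum_{i,j}M_{ij}z_iz_j$ where $z=(z_1,\dots,z_n)^T$. For $Q\in S_2$: $\mu$-rank$(Q)=0$ if $Q=0$; $\mu$-rank$(Q)=1$ if $Q=L^2$ for some nonzero $L\in S_1$; $\mu$-rank$(Q)=2$ if $Q$ is not of the form $L^2$ with $L\in S_1\setminus\{0\}$ but $Q=L_1L_2$ with $L_1,L_2\in S_1\setminus\{0\}$. For $M\in\mathbb P(M^\mu(n,\Bbbk))$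 with $\mu$-rank$(\tau(M))\le2$, $\mu$-rank$(M)$ is defined as $\mu$-rank$(\tau(M))$; thus "$\mu$-rank$(M)\le 2$" means $\tau(M)=L_1L_2$ for some nonzero $L_1,L_2\in S_1$. *)

theory Defs
  imports "HOL-Computational_Algebra.Polynomial"
begin

definition alg_closed :: "'a::field itself \<Rightarrow> bool" where
  "alg_closed _ \<longleftrightarrow> (\<forall>p :: 'a poly. degree p \<ge> 1 \<longrightarrow> (\<exists>x. poly p x = 0))"

(* Indices 1..n are modelled by a finite type 'n with CARD('n) = n (n >= 1 automatic).
   mu :: 'n => 'n => 'a is the matrix (mu_ij). *)

definition mu_symmetric :: "('n \<Rightarrow> 'n \<Rightarrow> 'a::field) \<Rightarrow> ('n \<Rightarrow> 'n \<Rightarrow> 'a) \<Rightarrow> bool" where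
  "mu_symmetric mu M \<longleftrightarrow> (\<forall>i j. M i j = mu i j * M j i)"

(* Degree-2 part S_2 of S = k<z_1..z_n>/(z_j z_i - mu_ij z_i z_j).
   An element of the free algebra of degree 2 is a coefficient array c with
   c i j the coefficient of the word z_i z_j.  Two such are equal in S_2 iff
   their difference lies in the span of the relations z_j z_i - mu_ij z_i z_j,
   i.e. c - d = sum_{i,j} t_ij (z_j z_i - mu_ij z_i z_j) for some scalars t. *)
definition s2_eq :: "('n::finite \<Rightarrow> 'n \<Rightarrow> 'a::field) \<Rightarrow> ('n \<Rightarrow> 'n \<Rightarrow> 'a) \<Rightarrow> ('n \<Rightarrow> 'n \<Rightarrow> 'a) \<Rightarrow> bool" where
  "s2_eq mu c d \<longleftrightarrow> (\<exists>t :: 'n \<Rightarrow> 'n \<Rightarrow> 'a. \<forall>p q. c p q - d p q = t q p - mu p q * t p q)"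

(* product in S of two degree-1 elements L1 = sum a_i z_i, L2 = sum b_j z_j, as a word-coefficient array *)
definition s1_mult :: "('n \<Rightarrow> 'a::field) \<Rightarrow> ('n \<Rightarrow> 'a) \<Rightarrow> ('n \<Rightarrow> 'n \<Rightarrow> 'a)" where
  "s1_mult a b = (\<lambda>i j. a i * b j)"

(* tau(M) = z^T M z = sum_{i,j} M_ij z_i z_j, as a word-coefficient array *)
definition tau :: "('n \<Rightarrow> 'n \<Rightarrow> 'a::field) \<Rightarrow> ('n \<Rightarrow> 'n \<Rightarrow> 'a)" where
  "tau M = (\<lambda>i j. M i j)"

definition mu_rank_le2 :: "('n::finite \<Rightarrow> 'n \<Rightarrow> 'a::field) \<Rightarrow> ('n \<Rightarrow> 'n \<Rightarrow> 'a) \<Rightarrow> bool" where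
  "mu_rank_le2 mu M \<longleftrightarrow> (\<exists>L1 L2. (\<exists>i. L1 i \<noteq> 0) \<and> (\<exists>i. L2 i \<noteq> 0) \<and> s2_eq mu (tau M) (s1_mult L1 L2))"

definition Phi :: "('n \<Rightarrow> 'n \<Rightarrow> 'a::field) \<Rightarrow> ('n \<Rightarrow> 'a) \<Rightarrow> ('n \<Rightarrow> 'a) \<Rightarrow> ('n \<Rightarrow> 'n \<Rightarrow> 'a)" where
  "Phi mu a b = (\<lambda>i j. a i * b j + mu i j * a j * b i)"

end

theory Submission
  imports Defs
begin

theorem proposition2p5:
  fixes mu :: "'n::finite \<Rightarrow> 'n \<Rightarrow> 'k::field"
  assumes "alg_closed TYPE('k)"
    and "(2::'k) \<noteq> 0"
    and "\<And>i j. mu i j \<noteq> 0"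
    and "\<And>i j. mu i j * mu j i = 1"
    and "\<And>i. mu i i = 1"
  shows "{M. \<exists>a b c. (\<exists>i. a i \<noteq> 0) \<and> (\<exists>i. b i \<noteq> 0) \<and> c \<noteq> 0 \<and> M = (\<lambda>i j. c * Phi mu a b i j)}
       = {M. mu_symmetric mu M \<and> (\<exists>i j. M i j \<noteq> 0) \<and> mu_rank_le2 mu M}"
proof (intro equalityI subsetI)
  fix M assume "M \<in> {M. \<exists>a b c. (\<exists>i. a i \<noteq> 0) \<and> (\<exists>i. b i \<noteq> 0) \<and> c \<noteq> 0 \<and> M = (\<lambda>i j. c * Phi mu a b i j)}"
  then obtain a b c i j where ai: "a i \<noteq> 0" and bj: "b j \<noteq> 0" and c: "c \<noteq> 0"
    and M: "M = (\<lambda>i j. c * Phi mu a b i j)" by blast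
  have sym: "mu_symmetric mu M"
    unfolding mu_symmetric_def M Phi_def
  proof (intro allI)
    fix p q
    have "mu p q * (c * (a q * b p + mu q p * a p * b q))
        = c * (mu p q * a q * b p + (mu p q * mu q p) * a p * b q)"
      by (simp add: algebra_simps)
    also have "\<dots> = c * (a p * b q + mu p q * a q * b p)" using assms(4)[of p q]
      by (simp add: algebra_simps)
    finally show "c * (a p * b q + mu p q * a q * b p) = mu p q * (c * (a q * b p + mu q p * a p * b q))"
      by (metis mult.assoc mult.left_commute)
  qed
  have diag: "Phi mu a b k k = 2 * a k * b k" for k
    unfolding Phi_def using assms(5)[of k] by (simp add: algebra_simps)
  have nz: "\<exists>i j. M i j \<noteq> 0"
  proof (cases "b i = 0")
    case False
    then have "M i i \<noteq> 0" using ai c assms(2) by (simp add: M diag)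
    then show ?thesis by blast
  next
    case bi: True
    show ?thesis
    proof (cases "a j = 0")
      case False
      then have "M j j \<noteq> 0" using bj c assms(2) by (simp add: M diag)
      then show ?thesis by blast
    next
      case True
      then have "M i j \<noteq> 0" using ai bj bi c by (simp add: M Phi_def)
      then show ?thesis by blast
    qed
  qed
  have "mu_rank_le2 mu M"
    unfolding mu_rank_le2_def
  proof (rule exI[of _ "\<lambda>k. 2 * c * a k"], rule exI[of _ b], intro conjI)
    show "\<exists>k. 2 * c * a k \<noteq> 0" using ai c assms(2) by auto
    show "\<exists>k. b k \<noteq> 0" using bj by auto
    show "s2_eq mu (tau M) (s1_mult (\<lambda>k. 2 * c * a k) b)"
      unfolding s2_eq_def tau_def s1_mult_def M Phi_def
      by (intro exI[of _ "\<lambda>p q. - c * a q * b p"] allI) (simp add: algebra_simps)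
  qed
  with sym nz show "M \<in> {M. mu_symmetric mu M \<and> (\<exists>i j. M i j \<noteq> 0) \<and> mu_rank_le2 mu M}"
    by blast
next
  fix M assume "M \<in> {M. mu_symmetric mu M \<and> (\<exists>i j. M i j \<noteq> 0) \<and> mu_rank_le2 mu M}"
  then have sym: "\<And>p q. M p q = mu p q * M q p" and nz: "\<exists>i j. M i j \<noteq> 0"
    and r: "mu_rank_le2 mu M" unfolding mem_Collect_eq mu_symmetric_def by blast+
  from r obtain L1 L2 t where l1: "\<exists>i. L1 i \<noteq> (0::'k)" and l2: "\<exists>i. L2 i \<noteq> 0"
    and t: "\<And>p q. M p q - L1 p * L2 q = t q p - mu p q * t p q"
    unfolding mu_rank_le2_def s2_eq_def tau_def s1_mult_def by blast
  have key: "M p q = (1/2) * Phi mu L1 L2 p q" for p q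
  proof -
    have e1: "M p q = L1 p * L2 q + t q p - mu p q * t p q" using t[of p q] by (simp add: algebra_simps)
    have e2: "M q p = L1 q * L2 p + t p q - mu q p * t q p" using t[of q p] by (simp add: algebra_simps)
    have "2 * M p q = M p q + mu p q * M q p" using sym[of p q] by simp
    also have "\<dots> = L1 p * L2 q + mu p q * L1 q * L2 p + t q p - (mu p q * mu q p) * t q p"
      unfolding e1 e2 by (simp add: algebra_simps)
    also have "\<dots> = Phi mu L1 L2 p q" using assms(4)[of p q] by (simp add: Phi_def)
    finally have h: "2 * M p q = Phi mu L1 L2 p q" .
    have "M p q = (1/2) * (2 * M p q)" using assms(2) by simp
    then show ?thesis unfolding h .
  qed
  have "M = (\<lambda>i j. (1/2) * Phi mu L1 L2 i j)" using key by blast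
  moreover have "(1/2::'k) \<noteq> 0" using assms(2) by simp
  ultimately show "M \<in> {M. \<exists>a b c. (\<exists>i. a i \<noteq> 0) \<and> (\<exists>i. b i \<noteq> 0) \<and> c \<noteq> 0 \<and> M = (\<lambda>i j. c * Phi mu a b i j)}"
    using l1 l2 by blast
qed

end
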